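(* Let $n>0$ be an integer. Let $(\pi_i)_{-n<i<n}$ be arbitrary probabilities in $[0,1]$. Consider the Markov chain $X_0,X_1,\ldots$ on $\{-n,\ldots,n\}$ with reflecting barriers, whose transition probabilities are $$p_{-n,-n+1}=p_{n,n-1}=1,\qquad p_{i,i+1}=\pi_i,\quad p_{i,i-1}=1-\pi_i\quad(-n<i<n).$$ All other transition probabilities are $0$. For states $i,j$, let $T_{i,j}=\min\{t>0: X_t=j\}$ be the hitting time of $j$ when the chain is started at $X_0=i$. Then $$\max\left(\mathrm{E}\{T_{0,n}\},\mathrm{E}\{T_{0,-n}\}\right)\ge \frac{2}{3}n^2.$$
   Context: Expectations may be infinite. *)

theory Defs
  imports "HOL-Analysis.Analysis"
begin

definition trans_prob :: "nat \<Rightarrow> (int \<Rightarrow> real) \<Rightarrow> int \<Rightarrow> int \<Rightarrow> real" where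
  "trans_prob n \<pi> i j =
     (if i = - int n then (if j = - int n + 1 then 1 else 0)
      else if i = int n then (if j = int n - 1 then 1 else 0)
      else if - int n < i \<and> i < int n then
        (if j = i + 1 then \<pi> i else if j = i - 1 then 1 - \<pi> i else 0)
      else 0)"

definition path_prob :: "nat \<Rightarrow> (int \<Rightarrow> real) \<Rightarrow> int \<Rightarrow> int list \<Rightarrow> real" where
  "path_prob n \<pi> i xs = (\<Prod>k<length xs. trans_prob n \<pi> ((i # xs) ! k) ((i # xs) ! (k + 1)))"

text \<open>P(T_{i,j} = t) for the chain started at X_0 = i, where T_{i,j} = min {t > 0. X_t = j}:
  sum of probabilities of trajectories x_1..x_t in the state space avoiding j at times
  1..t-1 and with x_t = j.\<close>
definition hit_prob :: "nat \<Rightarrow> (int \<Rightarrow> real) \<Rightarrow> int \<Rightarrow> int \<Rightarrow> nat \<Rightarrow> real" where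
  "hit_prob n \<pi> i j t =
     (\<Sum>xs \<in> {xs. length xs = t \<and> set xs \<subseteq> {- int n .. int n} \<and> xs \<noteq> [] \<and>
                  last xs = j \<and> j \<notin> set (butlast xs)}.
        path_prob n \<pi> i xs)"

text \<open>E{T_{i,j}} in [0, \<infinity>]: sum of t P(T = t), plus \<infinity> times P(T = \<infinity>).\<close>
definition exp_hit_time :: "nat \<Rightarrow> (int \<Rightarrow> real) \<Rightarrow> int \<Rightarrow> int \<Rightarrow> ennreal" where
  "exp_hit_time n \<pi> i j =
     (\<Sum>t. of_nat t * ennreal (hit_prob n \<pi> i j t))
     + (top :: ennreal) * (1 - (\<Sum>t. ennreal (hit_prob n \<pi> i j t)))"

end

theory Submission
  imports Defs
begin



lemma path_prob_Nil[simp]: "path_prob n \<pi> i [] = 1"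
  by (simp add: path_prob_def)

lemma path_prob_Cons[simp]: "path_prob n \<pi> i (y#ys) = trans_prob n \<pi> i y * path_prob n \<pi> y ys"
  unfolding path_prob_def by (simp add: prod.lessThan_Suc_shift del: prod.lessThan_Suc)

definition HS :: "nat \<Rightarrow> int \<Rightarrow> nat \<Rightarrow> int list set" where
  "HS n j t = {xs. length xs = t \<and> set xs \<subseteq> {- int n .. int n} \<and> xs \<noteq> [] \<and>
                  last xs = j \<and> j \<notin> set (butlast xs)}"

lemma hit_prob_HS: "hit_prob n \<pi> i j t = (\<Sum>xs\<in>HS n j t. path_prob n \<pi> i xs)"
  by (simp add: hit_prob_def HS_def)

lemma finite_HS: "finite (HS n j t)"
proof -
  have "HS n j t \<subseteq> {xs. set xs \<subseteq> {- int n .. int n} \<and> length xs = t}"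
    by (auto simp: HS_def)
  moreover have "finite {xs. set xs \<subseteq> {- int n .. int n} \<and> length xs = t}"
    by (rule finite_lists_length_eq) simp
  ultimately show ?thesis by (rule finite_subset)
qed

lemma HS_0: "HS n j 0 = {}" by (auto simp: HS_def)

lemma HS_1: "j \<in> {- int n .. int n} \<Longrightarrow> HS n j (Suc 0) = {[j]}"
  by (auto simp: HS_def length_Suc_conv)

lemma HS_SS: "HS n j (Suc (Suc t)) = (\<lambda>(y,ys). y#ys) ` (({- int n .. int n} - {j}) \<times> HS n j (Suc t))"
proof (intro set_eqI iffI)
  fix xs assume "xs \<in> HS n j (Suc (Suc t))"
  then obtain y ys where xs: "xs = y # ys" and l: "length ys = Suc t" and
    props: "set xs \<subseteq> {- int n .. int n}" "last xs = j" "j \<notin> set (butlast xs)"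
    by (auto simp: HS_def length_Suc_conv)
  have ne: "ys \<noteq> []" using l by auto
  show "xs \<in> (\<lambda>(y,ys). y#ys) ` (({- int n .. int n} - {j}) \<times> HS n j (Suc t))"
    using props ne l unfolding xs by (auto simp: HS_def image_iff)
next
  fix xs assume "xs \<in> (\<lambda>(y,ys). y#ys) ` (({- int n .. int n} - {j}) \<times> HS n j (Suc t))"
  then obtain y ys where xs: "xs = y # ys" and y: "y \<in> {- int n .. int n}" "y \<noteq> j"
     and ys: "ys \<in> HS n j (Suc t)" by (auto simp del: atLeastAtMost_iff)
  show "xs \<in> HS n j (Suc (Suc t))" using y ys unfolding xs by (auto simp: HS_def)
qed

lemma hit_prob_0[simp]: "hit_prob n \<pi> i j 0 = 0"
  by (simp add: hit_prob_HS HS_0)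

lemma hit_prob_Suc:
  assumes j: "j \<in> {- int n .. int n}"
  shows "hit_prob n \<pi> i j (Suc t) = (if t = 0 then trans_prob n \<pi> i j else 0)
     + (\<Sum>y\<in>{- int n .. int n} - {j}. trans_prob n \<pi> i y * hit_prob n \<pi> y j t)"
proof (cases t)
  case 0 then show ?thesis using j by (simp add: hit_prob_HS HS_1 HS_0)
next
  case (Suc t')
  have inj: "inj_on (\<lambda>(y,ys). y#ys) (({- int n .. int n} - {j}) \<times> HS n j (Suc t'))"
    by (auto simp: inj_on_def)
  have "hit_prob n \<pi> i j (Suc t) = (\<Sum>p\<in>({- int n .. int n} - {j}) \<times> HS n j (Suc t').
          path_prob n \<pi> i ((\<lambda>(y,ys). y#ys) p))"
    unfolding hit_prob_HS Suc HS_SS by (rule sum.reindex[OF inj, unfolded comp_def])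
  also have "\<dots> = (\<Sum>y\<in>{- int n .. int n} - {j}. \<Sum>ys\<in>HS n j (Suc t'). trans_prob n \<pi> i y * path_prob n \<pi> y ys)"
    by (simp add: sum.cartesian_product case_prod_beta)
  also have "\<dots> = (\<Sum>y\<in>{- int n .. int n} - {j}. trans_prob n \<pi> i y * hit_prob n \<pi> y j t)"
    by (simp add: hit_prob_HS Suc sum_distrib_left)
  finally show ?thesis using Suc by simp
qed




lemma tp_nonneg:
  assumes "\<And>i. - int n < i \<Longrightarrow> i < int n \<Longrightarrow> 0 \<le> \<pi> i \<and> \<pi> i \<le> 1"
  shows "0 \<le> trans_prob n \<pi> x y"
  using assms[of x] by (auto simp: trans_prob_def)

lemma tp_sum:
  assumes n: "n > 0" and x: "x \<in> {- int n .. int n}"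
  shows "(\<Sum>z\<in>{- int n .. int n}. trans_prob n \<pi> x z * g z) =
     (if x = - int n then g (x + 1) else if x = int n then g (x - 1)
      else \<pi> x * g (x + 1) + (1 - \<pi> x) * g (x - 1))"
proof -
  consider "x = - int n" | "x = int n" | "- int n < x \<and> x < int n" using x n by force
  then show ?thesis
  proof cases
    case 1
    have "(\<Sum>z\<in>{- int n .. int n}. trans_prob n \<pi> x z * g z) =
          (\<Sum>z\<in>{- int n .. int n}. if z = x + 1 then g z else 0)"
      by (rule sum.cong) (auto simp: trans_prob_def 1)
    also have "\<dots> = g (x + 1)" using 1 n by (simp add: sum.delta')
    finally show ?thesis using 1 by simp
  next
    case 2
    have "(\<Sum>z\<in>{- int n .. int n}. trans_prob n \<pi> x z * g z) =
          (\<Sum>z\<in>{- int n .. int n}. if z = x - 1 then g z else 0)"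
      by (rule sum.cong) (use n in \<open>auto simp: trans_prob_def 2\<close>)
    also have "\<dots> = g (x - 1)" using 2 n by (simp add: sum.delta')
    finally show ?thesis using 2 n by simp
  next
    case 3
    have "(\<Sum>z\<in>{- int n .. int n}. trans_prob n \<pi> x z * g z) =
          (\<Sum>z\<in>{- int n .. int n}. (if z = x + 1 then \<pi> x * g z else 0) + (if z = x - 1 then (1 - \<pi> x) * g z else 0))"
      by (rule sum.cong) (use 3 in \<open>auto simp: trans_prob_def\<close>)
    also have "\<dots> = \<pi> x * g (x + 1) + (1 - \<pi> x) * g (x - 1)" using 3
      by (simp add: sum.distrib sum.delta')
    finally show ?thesis using 3 by simp
  qed
qed

lemma tp_rowsum:
  assumes n: "n > 0" and x: "x \<in> {- int n .. int n}"
  shows "(\<Sum>z\<in>{- int n .. int n}. trans_prob n \<pi> x z) = 1"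
  using tp_sum[OF n x, of \<pi> "\<lambda>_. 1"] by simp

fun Qs :: "nat \<Rightarrow> (int \<Rightarrow> real) \<Rightarrow> int \<Rightarrow> nat \<Rightarrow> int \<Rightarrow> real" where
  "Qs n \<pi> j 0 x = 1"
| "Qs n \<pi> j (Suc t) x = (\<Sum>y\<in>{- int n .. int n} - {j}. trans_prob n \<pi> x y * Qs n \<pi> j t y)"

fun Ws :: "nat \<Rightarrow> (int \<Rightarrow> real) \<Rightarrow> int \<Rightarrow> (int \<Rightarrow> real) \<Rightarrow> nat \<Rightarrow> int \<Rightarrow> real" where
  "Ws n \<pi> j f 0 x = f x"
| "Ws n \<pi> j f (Suc t) x = (\<Sum>y\<in>{- int n .. int n} - {j}. trans_prob n \<pi> x y * Ws n \<pi> j f t y)"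

lemma conservation:
  assumes n: "n > 0" and j: "j \<in> {- int n .. int n}"
  shows "x \<in> {- int n .. int n} \<Longrightarrow> (\<Sum>s\<le>t. hit_prob n \<pi> x j s) + Qs n \<pi> j t x = 1"
proof (induction t arbitrary: x)
  case 0 then show ?case by simp
next
  case (Suc t)
  let ?S = "{- int n .. int n}"
  have "(\<Sum>s\<le>Suc t. hit_prob n \<pi> x j s) = (\<Sum>s\<le>t. hit_prob n \<pi> x j (Suc s))"
    by (simp add: sum.atMost_Suc_shift del: sum.atMost_Suc)
  also have "\<dots> = (\<Sum>s\<le>t. (if s = 0 then trans_prob n \<pi> x j else 0)
      + (\<Sum>y\<in>?S - {j}. trans_prob n \<pi> x y * hit_prob n \<pi> y j s))"
    by (simp add: hit_prob_Suc[OF j])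
  also have "\<dots> = trans_prob n \<pi> x j + (\<Sum>y\<in>?S - {j}. trans_prob n \<pi> x y * (\<Sum>s\<le>t. hit_prob n \<pi> y j s))"
    by (simp add: sum.distrib sum_distrib_left sum.swap[of _ "?S - {j}"])
  finally have 1: "(\<Sum>s\<le>Suc t. hit_prob n \<pi> x j s) = \<dots>" .
  have "(\<Sum>s\<le>Suc t. hit_prob n \<pi> x j s) + Qs n \<pi> j (Suc t) x
      = trans_prob n \<pi> x j + (\<Sum>y\<in>?S - {j}. trans_prob n \<pi> x y * ((\<Sum>s\<le>t. hit_prob n \<pi> y j s) + Qs n \<pi> j t y))"
    unfolding 1 by (simp add: sum.distrib distrib_left)
  also have "\<dots> = trans_prob n \<pi> x j + (\<Sum>y\<in>?S - {j}. trans_prob n \<pi> x y)"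
    using Suc.IH by simp
  also have "\<dots> = (\<Sum>y\<in>?S. trans_prob n \<pi> x y)"
    using j by (simp add: sum.remove)
  also have "\<dots> = 1" using tp_rowsum[OF n Suc.prems] .
  finally show ?case .
qed




locale chain =
  fixes n :: nat and \<pi> :: "int \<Rightarrow> real"
  assumes n: "n > 0"
    and pr: "\<And>i. - int n < i \<Longrightarrow> i < int n \<Longrightarrow> 0 \<le> \<pi> i \<and> \<pi> i \<le> 1"
begin

lemma tpn: "0 \<le> trans_prob n \<pi> x y" by (rule tp_nonneg[OF pr])

lemma pp_nonneg: "0 \<le> path_prob n \<pi> i xs"
  unfolding path_prob_def by (intro prod_nonneg) (simp add: tpn)

lemma hit_nonneg: "0 \<le> hit_prob n \<pi> i j t"
  unfolding hit_prob_def by (intro sum_nonneg) (simp add: pp_nonneg)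

lemma Qs_nonneg: "0 \<le> Qs n \<pi> j t x"
  by (induction t arbitrary: x) (auto intro!: sum_nonneg mult_nonneg_nonneg tpn)

lemma Ws_le:
  assumes "\<And>y. y \<in> {- int n .. int n} \<Longrightarrow> f y \<le> M"
  shows "x \<in> {- int n .. int n} \<Longrightarrow> Ws n \<pi> j f t x \<le> M * Qs n \<pi> j t x"
proof (induction t arbitrary: x)
  case 0 then show ?case using assms by simp
next
  case (Suc t)
  have "Ws n \<pi> j f (Suc t) x \<le> (\<Sum>y\<in>{- int n .. int n} - {j}. trans_prob n \<pi> x y * (M * Qs n \<pi> j t y))"
    unfolding Ws.simps by (intro sum_mono mult_left_mono Suc.IH tpn) auto
  also have "\<dots> = M * Qs n \<pi> j (Suc t) x" by (simp add: sum_distrib_left ac_simps)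
  finally show ?case .
qed

lemma invariant:
  assumes j: "j \<in> {- int n .. int n}" and fj: "f j = 0"
    and sub: "\<And>y. y \<in> {- int n .. int n} \<Longrightarrow> y \<noteq> j \<Longrightarrow>
                f y \<le> 1 + (\<Sum>z\<in>{- int n .. int n}. trans_prob n \<pi> y z * f z)"
  shows "x \<in> {- int n .. int n} \<Longrightarrow> x \<noteq> j \<Longrightarrow>
     f x \<le> (\<Sum>s\<le>t. real s * hit_prob n \<pi> x j s) + real t * Qs n \<pi> j t x + Ws n \<pi> j f t x"
proof (induction t arbitrary: x)
  case 0 then show ?case by simp
next
  case (Suc t)
  let ?S = "{- int n .. int n}"
  let ?R = "\<lambda>y. (\<Sum>s\<le>t. real s * hit_prob n \<pi> y j s) + real t * Qs n \<pi> j t y + Ws n \<pi> j f t y"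
  have "f x \<le> 1 + (\<Sum>z\<in>?S. trans_prob n \<pi> x z * f z)" using sub Suc.prems by blast
  also have "(\<Sum>z\<in>?S. trans_prob n \<pi> x z * f z) = (\<Sum>z\<in>?S - {j}. trans_prob n \<pi> x z * f z)"
    using j fj by (simp add: sum.remove)
  also have "\<dots> \<le> (\<Sum>y\<in>?S - {j}. trans_prob n \<pi> x y * ?R y)"
    by (intro sum_mono mult_left_mono Suc.IH tpn) auto
  also have "1 = trans_prob n \<pi> x j + (\<Sum>y\<in>?S - {j}. trans_prob n \<pi> x y * ((\<Sum>s\<le>t. hit_prob n \<pi> y j s) + Qs n \<pi> j t y))"
  proof -
    have "1 = (\<Sum>y\<in>?S. trans_prob n \<pi> x y)" using tp_rowsum[OF n Suc.prems(1)] by simp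
    also have "\<dots> = trans_prob n \<pi> x j + (\<Sum>y\<in>?S - {j}. trans_prob n \<pi> x y)"
      using j by (simp add: sum.remove)
    finally show ?thesis using conservation[OF n j] by simp
  qed
  finally have A: "f x \<le> trans_prob n \<pi> x j + (\<Sum>y\<in>?S - {j}. trans_prob n \<pi> x y * ((\<Sum>s\<le>t. hit_prob n \<pi> y j s) + Qs n \<pi> j t y + ?R y))"
    by (simp add: sum.distrib distrib_left add_ac)
  have B: "(\<Sum>s\<le>Suc t. real s * hit_prob n \<pi> x j s) = trans_prob n \<pi> x j +
      (\<Sum>y\<in>?S - {j}. trans_prob n \<pi> x y * (\<Sum>s\<le>t. real (Suc s) * hit_prob n \<pi> y j s))"
  proof -
    have "(\<Sum>s\<le>Suc t. real s * hit_prob n \<pi> x j s) = (\<Sum>s\<le>t. real (Suc s) * hit_prob n \<pi> x j (Suc s))"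
      by (simp add: sum.atMost_Suc_shift del: sum.atMost_Suc)
    also have "\<dots> = (\<Sum>s\<le>t. (if s = 0 then trans_prob n \<pi> x j else 0)
      + (\<Sum>y\<in>?S - {j}. trans_prob n \<pi> x y * (real (Suc s) * hit_prob n \<pi> y j s)))"
      by (intro sum.cong refl) (auto simp: hit_prob_Suc[OF j] distrib_left sum_distrib_left ac_simps)
    also have "\<dots> = trans_prob n \<pi> x j + (\<Sum>y\<in>?S - {j}. trans_prob n \<pi> x y * (\<Sum>s\<le>t. real (Suc s) * hit_prob n \<pi> y j s))"
      by (simp add: sum.distrib sum_distrib_left sum.swap[of _ "?S - {j}"])
    finally show ?thesis .
  qed
  have C: "(\<Sum>s\<le>t. real (Suc s) * hit_prob n \<pi> y j s) = (\<Sum>s\<le>t. hit_prob n \<pi> y j s) + (\<Sum>s\<le>t. real s * hit_prob n \<pi> y j s)" for y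
    by (simp add: sum.distrib[symmetric] algebra_simps)
  have "(\<Sum>s\<le>Suc t. real s * hit_prob n \<pi> x j s) + real (Suc t) * Qs n \<pi> j (Suc t) x + Ws n \<pi> j f (Suc t) x
     = trans_prob n \<pi> x j + (\<Sum>y\<in>?S - {j}. trans_prob n \<pi> x y * ((\<Sum>s\<le>t. hit_prob n \<pi> y j s) + Qs n \<pi> j t y + ?R y))"
    unfolding B C by (simp add: sum.distrib distrib_left sum_distrib_left algebra_simps)
  with A show ?case by simp
qed

end



context chain begin

lemma sub_le_exp:
  assumes j: "j \<in> {- int n .. int n}" and fj: "f j = 0"
    and sub: "\<And>y. y \<in> {- int n .. int n} \<Longrightarrow> y \<noteq> j \<Longrightarrow>
                f y \<le> 1 + (\<Sum>z\<in>{- int n .. int n}. trans_prob n \<pi> y z * f z)"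
    and x: "x \<in> {- int n .. int n}" "x \<noteq> j"
  shows "ennreal (f x) \<le> exp_hit_time n \<pi> x j"
proof -
  let ?S = "{- int n .. int n}"
  define h where "h s = hit_prob n \<pi> x j s" for s
  define Q where "Q t = Qs n \<pi> j t x" for t
  define M where "M = Max (f ` ?S)"
  have hnn: "0 \<le> h s" for s by (simp add: h_def hit_nonneg)
  have Qnn: "0 \<le> Q t" for t by (simp add: Q_def Qs_nonneg)
  have fM: "f y \<le> M" if "y \<in> ?S" for y unfolding M_def using that by (intro Max_ge) auto
  have cons: "(\<Sum>s\<le>t. h s) + Q t = 1" for t
    unfolding h_def Q_def by (rule conservation[OF n j x(1)])
  have inv: "f x \<le> (\<Sum>s\<le>t. real s * h s) + real t * Q t + M * Q t" for t
  proof -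
    have i1: "f x \<le> (\<Sum>s\<le>t. real s * hit_prob n \<pi> x j s) + real t * Qs n \<pi> j t x + Ws n \<pi> j f t x"
      using j fj x by (intro invariant) (auto intro: sub)
    have w1: "Ws n \<pi> j f t x \<le> M * Qs n \<pi> j t x"
      using x(1) by (intro Ws_le) (auto intro: fM)
    show ?thesis using i1 w1 unfolding h_def Q_def by linarith
  qed
  define H where "H = (\<Sum>s. ennreal (h s))"
  define E where "E = (\<Sum>s. of_nat s * ennreal (h s))"
  have ex: "exp_hit_time n \<pi> x j = E + top * (1 - H)"
    by (simp add: exp_hit_time_def E_def H_def h_def)
  show ?thesis
  proof (cases "H < 1")
    case True
    then have "0 < 1 - H" by (rule diff_gr0_ennreal)
    then have "top * (1 - H) = top" by (intro ennreal_top_mult_right) simp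
    then show ?thesis by (simp add: ex)
  next
    case False
    then have H1: "1 - H = 0" by (simp add: diff_eq_0_ennreal)
    show ?thesis
    proof (cases "E = top")
      case True then show ?thesis by (simp add: ex)
    next
      case False
      have Ee: "E = (\<Sum>s. ennreal (real s * h s))"
        unfolding E_def by (simp add: ennreal_mult hnn ennreal_of_nat_eq_real_of_nat)
      have sh: "summable (\<lambda>s. real s * h s)"
        using False unfolding Ee by (intro summable_suminf_not_top) (auto simp: hnn)
      define e where "e = (\<Sum>s. real s * h s)"
      have Ee2: "E = ennreal e" unfolding Ee e_def by (rule suminf_ennreal2) (auto simp: hnn sh)
      have h0: "h 0 = 0" by (simp add: h_def)
      have hle: "h s \<le> real s * h s" for s
        using hnn[of s] h0 by (cases s) (auto simp: algebra_simps)
      have sumh: "summable h"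
        by (rule summable_comparison_test[OF _ sh]) (auto simp: hnn hle)
      have "H = ennreal (\<Sum>s. h s)" unfolding H_def by (rule suminf_ennreal2) (auto simp: hnn sumh)
      with \<open>\<not> H < 1\<close> have Hge: "1 \<le> (\<Sum>s. h s)" by (simp add: ennreal_less_iff) 
      have Qlim: "Q \<longlonglongrightarrow> 1 - (\<Sum>s. h s)"
      proof -
        have "(\<lambda>t. \<Sum>s<Suc t. h s) \<longlonglongrightarrow> (\<Sum>s. h s)"
          using summable_LIMSEQ[OF sumh] by (rule LIMSEQ_Suc)
        then have "(\<lambda>t. 1 - (\<Sum>s<Suc t. h s)) \<longlonglongrightarrow> 1 - (\<Sum>s. h s)"
          by (intro tendsto_intros)
        moreover have "Q = (\<lambda>t. 1 - (\<Sum>s<Suc t. h s))"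
          using cons by (simp add: lessThan_Suc_atMost fun_eq_iff eq_diff_eq add.commute del: sum.lessThan_Suc)
        ultimately show ?thesis by simp
      qed
      have Q0: "Q \<longlonglongrightarrow> 0"
      proof -
        have "0 \<le> 1 - (\<Sum>s. h s)"
          by (rule tendsto_lowerbound[OF Qlim]) (auto simp: Qnn)
        with Hge have "1 - (\<Sum>s. h s) = 0" by simp
        with Qlim show ?thesis by simp
      qed
      have sle: "(\<Sum>s\<le>N. real s * h s) \<le> e" for N
        unfolding e_def by (rule sum_le_suminf[OF sh]) (auto simp: hnn)
      have step1: "f x \<le> e + real t * Q N + M * Q t" if "t \<le> N" for t N
      proof -
        have cN: "Q t = Q N + (\<Sum>s\<in>{Suc t..N}. h s)"
        proof -
          have "{..N} = {..t} \<union> {Suc t..N}" using that by auto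
          then have "(\<Sum>s\<le>N. h s) = (\<Sum>s\<le>t. h s) + (\<Sum>s\<in>{Suc t..N}. h s)"
            by (simp add: sum.union_disjoint ivl_disj_int)
          then show ?thesis using cons[of t] cons[of N] by linarith
        qed
        have "real t * (\<Sum>s\<in>{Suc t..N}. h s) \<le> (\<Sum>s\<in>{Suc t..N}. real s * h s)"
          by (simp add: sum_distrib_left) (intro sum_mono mult_right_mono, auto simp: hnn)
        moreover have "(\<Sum>s\<le>N. real s * h s) = (\<Sum>s\<le>t. real s * h s) + (\<Sum>s\<in>{Suc t..N}. real s * h s)"
        proof -
          have "{..N} = {..t} \<union> {Suc t..N}" using that by auto
          then show ?thesis by (simp add: sum.union_disjoint ivl_disj_int)
        qed
        ultimately show ?thesis using inv[of t] sle[of N] cN by (simp add: distrib_left)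
      qed
      have step2: "f x \<le> e + M * Q t" for t
      proof (rule tendsto_lowerbound)
        show "(\<lambda>N. e + real t * Q N + M * Q t) \<longlonglongrightarrow> e + M * Q t"
          using Q0 by (auto intro!: tendsto_eq_intros)
        show "\<forall>\<^sub>F N in sequentially. f x \<le> e + real t * Q N + M * Q t"
          using step1 by (auto simp: eventually_sequentially)
      qed simp
      have "f x \<le> e"
      proof (rule tendsto_lowerbound)
        show "(\<lambda>t. e + M * Q t) \<longlonglongrightarrow> e"
          using Q0 by (auto intro!: tendsto_eq_intros)
      qed (use step2 in auto)
      then show ?thesis by (simp add: ex H1 Ee2 ennreal_leI)
    qed
  qed
qed

end



lemma sum_int_first: "(y::int) \<le> m \<Longrightarrow> sum g {y..m} = g y + sum g {y+1..m}"
proof -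
  assume "y \<le> m"
  then have "{y..m} = insert y {y+1..m}" by auto
  then show ?thesis by simp
qed

lemma sum_int_last: "(m::int) \<le> y \<Longrightarrow> sum g {m..y} = sum g {m..y-1} + g y"
proof -
  assume "m \<le> y"
  then have "{m..y} = insert y {m..y-1}" by auto
  then show ?thesis by (simp add: add.commute)
qed

definition feasA :: "nat \<Rightarrow> (int \<Rightarrow> real) \<Rightarrow> (int \<Rightarrow> real) \<Rightarrow> bool" where
  "feasA n \<pi> a \<longleftrightarrow> a (- int n) \<le> 1 \<and> (\<forall>k. - int n < k \<and> k < int n \<longrightarrow> \<pi> k * a k \<le> 1 + (1 - \<pi> k) * a (k - 1))"

definition feasB :: "nat \<Rightarrow> (int \<Rightarrow> real) \<Rightarrow> (int \<Rightarrow> real) \<Rightarrow> bool" where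
  "feasB n \<pi> b \<longleftrightarrow> b (int n) \<le> 1 \<and> (\<forall>k. - int n < k \<and> k < int n \<longrightarrow> (1 - \<pi> k) * b k \<le> 1 + \<pi> k * b (k + 1))"

context chain begin

lemma fA:
  assumes "feasA n \<pi> a"
  shows "ennreal (\<Sum>k\<in>{0..int n - 1}. a k) \<le> exp_hit_time n \<pi> 0 (int n)"
proof -
  define f where "f x = (\<Sum>k\<in>{x..int n - 1}. a k)" for x
  have a1: "a (- int n) \<le> 1" and a2: "\<And>k. - int n < k \<Longrightarrow> k < int n \<Longrightarrow> \<pi> k * a k \<le> 1 + (1 - \<pi> k) * a (k - 1)"
    using assms by (auto simp: feasA_def)
  have fs: "f y = a y + f (y + 1)" if "y < int n" for y
    unfolding f_def using that by (simp add: sum_int_first)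
  have "f 0 \<le> exp_hit_time n \<pi> 0 (int n)"
  proof (rule sub_le_exp)
    show "f (int n) = 0" by (simp add: f_def)
    show "0 \<in> {- int n..int n}" "int n \<in> {- int n..int n}" by auto
    show "0 \<noteq> int n" using n by simp
    fix y assume y: "y \<in> {- int n..int n}" "y \<noteq> int n"
    show "f y \<le> 1 + (\<Sum>z\<in>{- int n..int n}. trans_prob n \<pi> y z * f z)"
    proof (cases "y = - int n")
      case True
      then show ?thesis using tp_sum[OF n y(1), of \<pi> f] fs[of y] a1 n by simp
    next
      case False
      then have yi: "- int n < y" "y < int n" using y by auto
      have e1: "f y = a y + f (y + 1)" using fs yi by simp
      have e2: "f (y - 1) = a (y - 1) + a y + f (y + 1)" using fs[of "y - 1"] e1 yi by simp
      have eq: "1 + (\<pi> y * f (y + 1) + (1 - \<pi> y) * f (y - 1)) - f y = 1 + (1 - \<pi> y) * a (y - 1) - \<pi> y * a y"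
        unfolding e1 e2 by (simp add: algebra_simps)
      show ?thesis using tp_sum[OF n y(1), of \<pi> f] False y(2) eq a2[OF yi] by simp
    qed
  qed
  then show ?thesis by (simp add: f_def)
qed

lemma fB:
  assumes "feasB n \<pi> b"
  shows "ennreal (\<Sum>k\<in>{- int n + 1..0}. b k) \<le> exp_hit_time n \<pi> 0 (- int n)"
proof -
  define f where "f x = (\<Sum>k\<in>{- int n + 1..x}. b k)" for x
  have b1: "b (int n) \<le> 1" and b2: "\<And>k. - int n < k \<Longrightarrow> k < int n \<Longrightarrow> (1 - \<pi> k) * b k \<le> 1 + \<pi> k * b (k + 1)"
    using assms by (auto simp: feasB_def)
  have fs: "f y = f (y - 1) + b y" if "- int n < y" for y
    unfolding f_def using that by (simp add: sum_int_last)
  have "f 0 \<le> exp_hit_time n \<pi> 0 (- int n)"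
  proof (rule sub_le_exp)
    show "f (- int n) = 0" by (simp add: f_def)
    show "0 \<in> {- int n..int n}" "- int n \<in> {- int n..int n}" by auto
    show "0 \<noteq> - int n" using n by simp
    fix y assume y: "y \<in> {- int n..int n}" "y \<noteq> - int n"
    show "f y \<le> 1 + (\<Sum>z\<in>{- int n..int n}. trans_prob n \<pi> y z * f z)"
    proof (cases "y = int n")
      case True
      then show ?thesis using tp_sum[OF n y(1), of \<pi> f] fs[of y] b1 n by simp
    next
      case False
      then have yi: "- int n < y" "y < int n" using y by auto
      have e1: "f y = f (y - 1) + b y" using fs yi by simp
      have e2: "f (y + 1) = f (y - 1) + b y + b (y + 1)" using fs[of "y + 1"] e1 yi by simp
      have eq: "1 + (\<pi> y * f (y + 1) + (1 - \<pi> y) * f (y - 1)) - f y = 1 + \<pi> y * b (y + 1) - (1 - \<pi> y) * b y"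
        unfolding e1 e2 by (simp add: algebra_simps)
      show ?thesis using tp_sum[OF n y(1), of \<pi> f] False y(2) eq b2[OF yi] by simp
    qed
  qed
  then show ?thesis by (simp add: f_def)
qed

end



lemma frac_pair: "(x::real) > 0 \<Longrightarrow> y > 0 \<Longrightarrow> x / y + y / x \<ge> 2"
proof -
  assume xy: "x > 0" "y > 0"
  have "x / y + y / x - 2 = (x - y)^2 / (x * y)" using xy by (simp add: field_simps power2_eq_square)
  moreover have "(x - y)^2 / (x * y) \<ge> 0" using xy by simp
  ultimately show ?thesis by linarith
qed

locale ndc =
  fixes N :: nat and s :: "nat \<Rightarrow> real"
  assumes spos: "\<And>l. 1 \<le> l \<Longrightarrow> l < N \<Longrightarrow> s l > 0"
begin

definition c :: "nat \<Rightarrow> real" where "c e = (\<Prod>l<e. s (Suc l))"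

lemma c_Suc: "c (Suc e) = c e * s (Suc e)" by (simp add: c_def)

lemma c_pos: "e < N \<Longrightarrow> c e > 0"
  unfolding c_def by (intro prod_pos) (auto intro: spos)

definition \<alpha> :: "nat \<Rightarrow> real" where "\<alpha> e = (c e + 2 * (\<Sum>i<e. c i)) / c e"
definition \<beta> :: "nat \<Rightarrow> real" where "\<beta> e = (c e + 2 * (\<Sum>i\<in>{e<..<N}. c i)) / c e"

lemma \<alpha>_0: "\<alpha> 0 = 1" by (simp add: \<alpha>_def c_def)

lemma \<beta>_last: "N > 0 \<Longrightarrow> \<beta> (N - 1) = 1"
proof -
  assume "N > 0"
  then have "{N - 1<..<N} = {}" by auto
  then show ?thesis using c_pos[of "N - 1"] \<open>N > 0\<close> by (simp add: \<beta>_def)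
qed

lemma \<alpha>_rec: "Suc d < N \<Longrightarrow> \<alpha> (Suc d) * s (Suc d) = s (Suc d) + \<alpha> d + 1"
proof -
  assume d: "Suc d < N"
  have cd: "c d > 0" using c_pos d by simp
  have sp: "s (Suc d) > 0" using spos d by simp
  show ?thesis unfolding \<alpha>_def c_Suc using cd sp
    by (simp add: field_simps c_Suc)
qed

lemma \<beta>_rec: "Suc d < N \<Longrightarrow> \<beta> d = 1 + s (Suc d) * (1 + \<beta> (Suc d))"
proof -
  assume d: "Suc d < N"
  have cd: "c d > 0" using c_pos d by simp
  have sp: "s (Suc d) > 0" using spos d by simp
  have split: "{d<..<N} = insert (Suc d) {Suc d<..<N}" using d by auto
  show ?thesis unfolding \<beta>_def c_Suc split using cd sp
    by (simp add: field_simps c_Suc)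
qed

lemma \<alpha>_ge: "e < N \<Longrightarrow> m \<le> e \<Longrightarrow> \<alpha> e \<ge> 2 * (\<Sum>i<m. c i / c e)"
proof -
  assume e: "e < N" "m \<le> e"
  have ce: "c e > 0" using c_pos e by simp
  have cnn: "\<And>i. i < N \<Longrightarrow> 0 \<le> c i" using c_pos less_imp_le by blast
  have "(\<Sum>i<m. c i) \<le> (\<Sum>i<e. c i)"
    using e by (intro sum_mono2) (auto intro: cnn)
  then have "2 * (\<Sum>i<m. c i) / c e \<le> (c e + 2 * (\<Sum>i<e. c i)) / c e"
    using ce by (intro divide_right_mono) auto
  then show ?thesis by (simp add: \<alpha>_def sum_divide_distrib[symmetric])
qed

lemma \<beta>_ge: "e < m \<Longrightarrow> m \<le> N \<Longrightarrow> \<beta> e \<ge> 2 * (\<Sum>i\<in>{m..<N}. c i / c e)"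
proof -
  assume e: "e < m" "m \<le> N"
  have ce: "c e > 0" using c_pos e by simp
  have cnn: "\<And>i. i < N \<Longrightarrow> 0 \<le> c i" using c_pos less_imp_le by blast
  have "(\<Sum>i\<in>{m..<N}. c i) \<le> (\<Sum>i\<in>{e<..<N}. c i)"
    using e by (intro sum_mono2) (auto intro: cnn)
  then have "2 * (\<Sum>i\<in>{m..<N}. c i) / c e \<le> (c e + 2 * (\<Sum>i\<in>{e<..<N}. c i)) / c e"
    using ce by (intro divide_right_mono) auto
  then show ?thesis by (simp add: \<beta>_def sum_divide_distrib[symmetric])
qed

lemma AB_bound:
  assumes "N = 2 * n"
  shows "(\<Sum>e\<in>{n..<N}. \<alpha> e) + (\<Sum>e<n. \<beta> e) \<ge> 4 * real n ^ 2"
proof -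
  have "(\<Sum>e\<in>{n..<N}. \<alpha> e) \<ge> (\<Sum>e\<in>{n..<N}. \<Sum>i<n. 2 * (c i / c e))"
    by (intro sum_mono) (use \<alpha>_ge in \<open>auto simp: sum_distrib_left\<close>)
  moreover have "(\<Sum>e<n. \<beta> e) \<ge> (\<Sum>e<n. \<Sum>i\<in>{n..<N}. 2 * (c i / c e))"
    by (intro sum_mono) (use \<beta>_ge assms in \<open>auto simp: sum_distrib_left\<close>)
  moreover have "(\<Sum>e<n. \<Sum>i\<in>{n..<N}. 2 * (c i / c e)) = (\<Sum>e\<in>{n..<N}. \<Sum>i<n. 2 * (c e / c i))"
    by (rule sum.swap)
  moreover have "(\<Sum>e\<in>{n..<N}. \<Sum>i<n. 2 * (c i / c e)) + (\<Sum>e\<in>{n..<N}. \<Sum>i<n. 2 * (c e / c i))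
      \<ge> (\<Sum>e\<in>{n..<N}. \<Sum>i<n. 4)"
  proof -
    have "(\<Sum>e\<in>{n..<N}. \<Sum>i<n. 2 * (c i / c e)) + (\<Sum>e\<in>{n..<N}. \<Sum>i<n. 2 * (c e / c i))
       = (\<Sum>e\<in>{n..<N}. \<Sum>i<n. 2 * (c i / c e + c e / c i))"
      by (simp add: sum.distrib distrib_left)
    also have "\<dots> \<ge> (\<Sum>e\<in>{n..<N}. \<Sum>i<n. 4)"
    proof (intro sum_mono)
      fix e i assume "e \<in> {n..<N}" "i \<in> {..<n}"
      then have "c i > 0" "c e > 0" using assms by (auto intro!: c_pos)
      then have "c i / c e + c e / c i \<ge> 2" by (rule frac_pair)
      then show "4 \<le> 2 * (c i / c e + c e / c i)" by (simp add: algebra_simps)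
    qed
    finally show ?thesis .
  qed
  moreover have "(\<Sum>e\<in>{n..<N}. \<Sum>i<n. (4::real)) = 4 * real n ^ 2"
    using assms by (simp add: power2_eq_square)
  ultimately show ?thesis by linarith
qed

end



context chain begin

lemma nondeg_case:
  assumes nd: "\<And>k. - int n < k \<Longrightarrow> k < int n \<Longrightarrow> 0 < \<pi> k \<and> \<pi> k < 1"
  shows "\<exists>a b. feasA n \<pi> a \<and> feasB n \<pi> b \<and>
     (\<Sum>k\<in>{0..int n - 1}. a k) + (\<Sum>k\<in>{- int n + 1..0}. b k) \<ge> 4 * real n ^ 2"
proof -
  define s where "s l = \<pi> (int l - int n) / (1 - \<pi> (int l - int n))" for l
  interpret C: ndc "2 * n" s
    by unfold_locales (use nd in \<open>auto simp: s_def\<close>)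
  define a where "a k = C.\<alpha> (nat (k + int n))" for k
  define b where "b k = C.\<beta> (nat (k - 1 + int n))" for k
  have fa: "feasA n \<pi> a"
    unfolding feasA_def
  proof (intro conjI allI impI)
    show "a (- int n) \<le> 1" by (simp add: a_def C.\<alpha>_0)
    fix k assume k: "- int n < k \<and> k < int n"
    define d where "d = nat (k - 1 + int n)"
    have kd: "nat (k + int n) = Suc d" and dN: "Suc d < 2 * n" and ks: "int (Suc d) - int n = k"
      using k by (auto simp: d_def)
    have p: "0 < \<pi> k" "\<pi> k < 1" using nd k by auto
    have r: "C.\<alpha> (Suc d) * s (Suc d) = s (Suc d) + C.\<alpha> d + 1" by (rule C.\<alpha>_rec[OF dN])
    have sS: "s (Suc d) = \<pi> k / (1 - \<pi> k)" unfolding s_def ks ..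
    have "\<pi> k * C.\<alpha> (Suc d) = 1 + (1 - \<pi> k) * C.\<alpha> d"
      using r p unfolding sS by (simp add: field_simps)
    moreover have "a (k - 1) = C.\<alpha> d" by (simp add: a_def d_def)
    ultimately show "\<pi> k * a k \<le> 1 + (1 - \<pi> k) * a (k - 1)" by (simp add: a_def kd)
  qed
  have fb: "feasB n \<pi> b"
    unfolding feasB_def
  proof (intro conjI allI impI)
    have "nat (int n - 1 + int n) = 2 * n - 1" using n by simp
    then show "b (int n) \<le> 1" using C.\<beta>_last n by (simp add: b_def)
    fix k assume k: "- int n < k \<and> k < int n"
    define d where "d = nat (k - 1 + int n)"
    have kd: "nat (k + int n) = Suc d" and dN: "Suc d < 2 * n" and ks: "int (Suc d) - int n = k"
      using k by (auto simp: d_def)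
    have p: "0 < \<pi> k" "\<pi> k < 1" using nd k by auto
    have r: "C.\<beta> d = 1 + s (Suc d) * (1 + C.\<beta> (Suc d))" by (rule C.\<beta>_rec[OF dN])
    have sS: "s (Suc d) = \<pi> k / (1 - \<pi> k)" unfolding s_def ks ..
    have "(1 - \<pi> k) * C.\<beta> d = 1 + \<pi> k * C.\<beta> (Suc d)"
      using r p unfolding sS by (simp add: field_simps)
    then show "(1 - \<pi> k) * b k \<le> 1 + \<pi> k * b (k + 1)" by (simp add: b_def kd d_def[symmetric])
  qed
  have sa: "(\<Sum>k\<in>{0..int n - 1}. a k) = (\<Sum>e\<in>{n..<2*n}. C.\<alpha> e)"
    by (rule sum.reindex_bij_witness[where j = "\<lambda>k. nat (k + int n)" and i = "\<lambda>e. int e - int n"])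
       (auto simp: a_def)
  have sb: "(\<Sum>k\<in>{- int n + 1..0}. b k) = (\<Sum>e<n. C.\<beta> e)"
    by (rule sum.reindex_bij_witness[where j = "\<lambda>k. nat (k - 1 + int n)" and i = "\<lambda>e. int e + 1 - int n"])
       (auto simp: b_def)
  have "(\<Sum>e\<in>{n..<2*n}. C.\<alpha> e) + (\<Sum>e<n. C.\<beta> e) \<ge> 4 * real n ^ 2"
    by (rule C.AB_bound) simp
  then show ?thesis using fa fb unfolding sa[symmetric] sb[symmetric] by blast
qed

end



context chain begin

lemma deg_case:
  assumes j: "- int n < j" "j < int n" and pj: "\<pi> j = 0"
    and near: "\<And>m. \<bar>m\<bar> < \<bar>j\<bar> \<Longrightarrow> 0 < \<pi> m \<and> \<pi> m < 1"
  shows "\<exists>a. feasA n \<pi> a \<and> (\<Sum>k\<in>{0..int n - 1}. a k) \<ge> V"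
proof (cases "j \<ge> 0")
  case True
  define C where "C = max V 0"
  define a where "a k = (if k = j then C else 0)" for k
  have ann: "0 \<le> a k" for k by (simp add: a_def C_def)
  have "feasA n \<pi> a" unfolding feasA_def
  proof (intro conjI allI impI)
    show "a (- int n) \<le> 1" using True n by (simp add: a_def)
    fix k assume k: "- int n < k \<and> k < int n"
    have "0 \<le> (1 - \<pi> k) * a (k - 1)" using pr[of k] k ann[of "k-1"] by simp
    moreover have "\<pi> k * a k = 0" using pj by (simp add: a_def)
    ultimately show "\<pi> k * a k \<le> 1 + (1 - \<pi> k) * a (k - 1)" by linarith
  qed
  moreover have "(\<Sum>k\<in>{0..int n - 1}. a k) = C" using True j unfolding a_def by (simp add: sum.delta')
  ultimately show ?thesis by (intro exI[of _ a]) (auto simp: C_def)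
next
  case False
  define C where "C = max V 0"
  define \<sigma> where "\<sigma> l = \<pi> l / (1 - \<pi> l)" for l
  define a where "a k = (if j \<le> k \<and> k \<le> 0 then C * (\<Prod>l\<in>{k+1..0}. \<sigma> l) else 0)" for k
  have \<sigma>nn: "0 \<le> \<sigma> l" if "j < l" "l \<le> 0" for l
    using near[of l] that False by (simp add: \<sigma>_def)
  have ann: "0 \<le> a k" for k
  proof (cases "j \<le> k \<and> k \<le> 0")
    case True
    then have "0 \<le> (\<Prod>l\<in>{k+1..0}. \<sigma> l)" by (intro prod_nonneg \<sigma>nn) auto
    then show ?thesis using True by (simp add: a_def C_def)
  next
    case False then show ?thesis unfolding a_def by auto
  qed
  have "feasA n \<pi> a" unfolding feasA_def
  proof (intro conjI allI impI)
    show "a (- int n) \<le> 1" using j by (simp add: a_def)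
    fix k assume k: "- int n < k \<and> k < int n"
    have pk: "0 \<le> \<pi> k" "\<pi> k \<le> 1" using pr[of k] k by auto
    consider "k = j" | "j < k \<and> k \<le> 0" | "k > 0" | "k < j" by linarith
    then show "\<pi> k * a k \<le> 1 + (1 - \<pi> k) * a (k - 1)"
    proof cases
      case 1 then show ?thesis using pj by (simp add: a_def)
    next
      case 2
      have near2: "0 < \<pi> k" "\<pi> k < 1" using near[of k] 2 False by auto
      have "a (k - 1) = C * (\<Prod>l\<in>{k..0}. \<sigma> l)" using 2 by (simp add: a_def)
      also have "(\<Prod>l\<in>{k..0}. \<sigma> l) = \<sigma> k * (\<Prod>l\<in>{k+1..0}. \<sigma> l)"
      proof -
        have "{k..0} = insert k {k+1..0}" using 2 by auto
        then show ?thesis by simp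
      qed
      finally have "a (k - 1) = \<sigma> k * a k" using 2 by (simp add: a_def)
      then have "(1 - \<pi> k) * a (k - 1) = \<pi> k * a k"
        using near2 by (simp add: \<sigma>_def field_simps)
      then show ?thesis by simp
    next
      case 3
      then have "a k = 0" by (simp add: a_def)
      then show ?thesis using pk ann[of "k - 1"] by simp
    next
      case 4
      then show ?thesis by (simp add: a_def)
    qed
  qed
  moreover have "(\<Sum>k\<in>{0..int n - 1}. a k) = (\<Sum>k\<in>{0..int n - 1}. if k = 0 then C else 0)"
    using False by (intro sum.cong refl) (auto simp: a_def)
  moreover have "\<dots> = C" using n by (simp add: sum.delta')
  ultimately show ?thesis by (intro exI[of _ a]) (auto simp: C_def)
qed

end

lemma reflect:
  assumes "feasA n (\<lambda>k. 1 - \<pi> (- k)) a"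
  shows "feasB n \<pi> (\<lambda>k. a (- k))" "(\<Sum>k\<in>{- int n + 1..0}. a (- k)) = (\<Sum>k\<in>{0..int n - 1}. a k)"
proof -
  have fa: "\<And>k. - int n < k \<Longrightarrow> k < int n \<Longrightarrow> (1 - \<pi> (- k)) * a k \<le> 1 + (1 - (1 - \<pi> (- k))) * a (k - 1)"
    using assms unfolding feasA_def by blast
  show "feasB n \<pi> (\<lambda>k. a (- k))"
    unfolding feasB_def
  proof (intro conjI allI impI)
    show "a (- int n) \<le> 1" using assms by (simp add: feasA_def)
    fix k assume k: "- int n < k \<and> k < int n"
    have 1: "(1 - \<pi> (- (- k))) * a (- k) \<le> 1 + (1 - (1 - \<pi> (- (- k)))) * a (- k - 1)"
      using k by (intro fa) auto
    have 2: "- k - 1 = - (k + 1)" by simp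
    have 3: "1 - (1 - \<pi> k) = \<pi> k" by simp
    show "(1 - \<pi> k) * a (- k) \<le> 1 + \<pi> k * a (- (k + 1))"
      using 1 unfolding minus_minus 2 3 .
  qed
  show "(\<Sum>k\<in>{- int n + 1..0}. a (- k)) = (\<Sum>k\<in>{0..int n - 1}. a k)"
    by (rule sum.reindex_bij_witness[where j = uminus and i = uminus]) auto
qed




theorem corollary1:
  fixes n :: nat and \<pi> :: "int \<Rightarrow> real"
  assumes "n > 0"
    and "\<And>i. - int n < i \<Longrightarrow> i < int n \<Longrightarrow> 0 \<le> \<pi> i \<and> \<pi> i \<le> 1"
  shows "max (exp_hit_time n \<pi> 0 (int n)) (exp_hit_time n \<pi> 0 (- int n))
           \<ge> ennreal (2 / 3 * real n ^ 2)"
proof -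
  interpret P: chain n \<pi> by unfold_locales (use assms in auto)
  define V where "V = 2 / 3 * real n ^ 2"
  have key: "(\<exists>a. feasA n \<pi> a \<and> (\<Sum>k\<in>{0..int n - 1}. a k) \<ge> V) \<or>
             (\<exists>b. feasB n \<pi> b \<and> (\<Sum>k\<in>{- int n + 1..0}. b k) \<ge> V)"
  proof (cases "\<exists>j. - int n < j \<and> j < int n \<and> (\<pi> j = 0 \<or> \<pi> j = 1)")
    case False
    have nd: "0 < \<pi> k \<and> \<pi> k < 1" if k: "- int n < k" "k < int n" for k
    proof -
      have "\<pi> k \<noteq> 0" "\<pi> k \<noteq> 1" using False k by blast+
      then show ?thesis using assms(2)[OF k] by auto
    qed
    obtain a b where ab: "feasA n \<pi> a" "feasB n \<pi> b"
      "(\<Sum>k\<in>{0..int n - 1}. a k) + (\<Sum>k\<in>{- int n + 1..0}. b k) \<ge> 4 * real n ^ 2"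
      using P.nondeg_case[OF nd] by blast
    have "V \<le> 2 * real n ^ 2" unfolding V_def by simp
    then have "(\<Sum>k\<in>{0..int n - 1}. a k) \<ge> V \<or> (\<Sum>k\<in>{- int n + 1..0}. b k) \<ge> V"
      using ab(3) by linarith
    then show ?thesis using ab(1,2) by blast
  next
    case True
    then obtain j0 where j0: "- int n < j0 \<and> j0 < int n \<and> (\<pi> j0 = 0 \<or> \<pi> j0 = 1)" by blast
    obtain j where jP: "- int n < j \<and> j < int n \<and> (\<pi> j = 0 \<or> \<pi> j = 1)"
      and jmin: "\<forall>y. - int n < y \<and> y < int n \<and> (\<pi> y = 0 \<or> \<pi> y = 1) \<longrightarrow> nat \<bar>j\<bar> \<le> nat \<bar>y\<bar>"
      using ex_has_least_nat[of "\<lambda>j. - int n < j \<and> j < int n \<and> (\<pi> j = 0 \<or> \<pi> j = 1)" j0 "\<lambda>j. nat \<bar>j\<bar>", OF j0]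
      by blast
    have near: "0 < \<pi> m \<and> \<pi> m < 1" if "\<bar>m\<bar> < \<bar>j\<bar>" for m
    proof -
      have m: "- int n < m" "m < int n" using that jP by auto
      have "\<not> (\<pi> m = 0 \<or> \<pi> m = 1)"
      proof
        assume "\<pi> m = 0 \<or> \<pi> m = 1"
        then have "nat \<bar>j\<bar> \<le> nat \<bar>m\<bar>" using jmin m by blast
        then show False using that by linarith
      qed
      then show ?thesis using assms(2)[OF m] by auto
    qed
    show ?thesis
    proof (cases "\<pi> j = 0")
      case True
      then show ?thesis using P.deg_case[of j V] jP near by blast
    next
      case False
      then have pj: "\<pi> j = 1" using jP by auto
      define \<pi>' where "\<pi>' k = 1 - \<pi> (- k)" for k
      interpret P': chain n \<pi>'
        by unfold_locales (use assms in \<open>auto simp: \<pi>'_def\<close>)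
      have near': "0 < \<pi>' m \<and> \<pi>' m < 1" if "\<bar>m\<bar> < \<bar>- j\<bar>" for m
        using near[of "- m"] that by (auto simp: \<pi>'_def)
      obtain a where a: "feasA n \<pi>' a" "(\<Sum>k\<in>{0..int n - 1}. a k) \<ge> V"
        using P'.deg_case[of "- j" V] jP near' pj by (auto simp: \<pi>'_def)
      have "feasA n (\<lambda>k. 1 - \<pi> (- k)) a" using a(1) by (simp add: \<pi>'_def[abs_def])
      from reflect[OF this] a(2) show ?thesis by auto
    qed
  qed
  show ?thesis
  proof -
    from key show ?thesis
    proof
      assume "\<exists>a. feasA n \<pi> a \<and> (\<Sum>k\<in>{0..int n - 1}. a k) \<ge> V"
      then obtain a where a: "feasA n \<pi> a" "(\<Sum>k\<in>{0..int n - 1}. a k) \<ge> V" by blast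
      have "ennreal V \<le> ennreal (\<Sum>k\<in>{0..int n - 1}. a k)" using a(2) by (rule ennreal_leI)
      also have "\<dots> \<le> exp_hit_time n \<pi> 0 (int n)" by (rule P.fA[OF a(1)])
      finally show ?thesis unfolding V_def by (simp add: le_max_iff_disj)
    next
      assume "\<exists>b. feasB n \<pi> b \<and> (\<Sum>k\<in>{- int n + 1..0}. b k) \<ge> V"
      then obtain b where b: "feasB n \<pi> b" "(\<Sum>k\<in>{- int n + 1..0}. b k) \<ge> V" by blast
      have "ennreal V \<le> ennreal (\<Sum>k\<in>{- int n + 1..0}. b k)" using b(2) by (rule ennreal_leI)
      also have "\<dots> \<le> exp_hit_time n \<pi> 0 (- int n)" by (rule P.fB[OF b(1)])
      finally show ?thesis unfolding V_def by (simp add: le_max_iff_disj)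
    qed
  qed
qed



end
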